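(* Let $\tau=x+iy$ with $y>0$, and let $u,v\in\mathbb{R}$ be not both integers. For $s\in[1,2]$ and $p>w>0$ set $$h(w,s)=\sum_{\substack{(m,n)\in\mathbb{Z}^2\\ w<|m\tau+n|^2<p}}\frac{e^{2\pi i(mu+nv)}}{|m\tau+n|^{2s}}.$$ Then $h(w,s)=O(w^{1/2-s})$ uniformly for $s\in[1,2]$, with implied constant independent of $w$, $s$ and $p$. *)

theory Defs
  imports Complex_Main
begin

definition lattice_sum :: "complex \<Rightarrow> real \<Rightarrow> real \<Rightarrow> real \<Rightarrow> real \<Rightarrow> real \<Rightarrow> complex" where
  "lattice_sum \<tau> u v p w s =
     (\<Sum>(m,n)\<in>{(m::int, n::int). w < (cmod (of_int m * \<tau> + of_int n))\<^sup>2 \<and>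
                                 (cmod (of_int m * \<tau> + of_int n))\<^sup>2 < p}.
        exp (2 * of_real pi * \<i> * of_real (of_int m * u + of_int n * v))
        / of_real ((cmod (of_int m * \<tau> + of_int n)) powr (2 * s)))"

end

theory Submission
  imports Defs "HOL-Analysis.Analysis"
begin

definition ee :: "real \<Rightarrow> int \<Rightarrow> complex" where
  "ee v n = exp (2 * of_real pi * \<i> * of_real (of_int n * v))"

lemma ee_add: "ee v (a + b) = ee v a * ee v b"
  unfolding ee_def by (simp add: distrib_right distrib_left exp_add[symmetric] algebra_simps)

lemma ee_norm: "cmod (ee v n) = 1"
  unfolding ee_def by (simp add: norm_exp)

lemma ee_ne1: assumes "v \<notin> \<int>" shows "ee v 1 \<noteq> 1"
proof
  assume "ee v 1 = 1"
  then obtain k :: int where "2 * pi * v = of_int (2 * k) * pi" unfolding ee_def exp_eq_1 by auto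
  then have "v = of_int k" by simp
  with assms show False by simp
qed

lemma geo_tel: "(ee v 1 - 1) * (\<Sum>n\<in>{a..a + int k - 1}. ee v n) = ee v (a + int k) - ee v a"
proof (induction k)
  case 0 then show ?case by simp
next
  case (Suc k)
  have "{a..a + int (Suc k) - 1} = insert (a + int k) {a..a + int k - 1}" by auto
  then have "(\<Sum>n\<in>{a..a + int (Suc k) - 1}. ee v n) = ee v (a + int k) + (\<Sum>n\<in>{a..a + int k - 1}. ee v n)"
    by simp
  then have "(ee v 1 - 1) * (\<Sum>n\<in>{a..a + int (Suc k) - 1}. ee v n) = (ee v 1 - 1) * ee v (a + int k) + (ee v (a + int k) - ee v a)"
    using Suc by (simp add: distrib_left)
  also have "\<dots> = ee v (a + int (Suc k)) - ee v a"
    using ee_add[of v "a + int k" 1] by (simp add: algebra_simps)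
  finally show ?case .
qed

lemma geo_bound: assumes "v \<notin> \<int>" shows "cmod (\<Sum>n\<in>{a..b}. ee v n) \<le> 2 / cmod (ee v 1 - 1)"
proof (cases "b < a")
  case True then show ?thesis by simp
next
  case False
  define k where "k = nat (b - a + 1)"
  have b: "b = a + int k - 1" using False k_def by simp
  have nz: "cmod (ee v 1 - 1) > 0" using ee_ne1[OF assms] by simp
  have "cmod (ee v 1 - 1) * cmod (\<Sum>n\<in>{a..b}. ee v n) = cmod (ee v (a + int k) - ee v a)"
    using geo_tel[of v a k] b by (metis norm_mult)
  also have "\<dots> \<le> 2" using norm_triangle_ineq4[of "ee v (a + int k)" "ee v a"] by (simp add: ee_norm)
  finally show ?thesis using nz by (simp add: field_simps mult.commute)
qed


lemma abel_dec_aux: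
  fixes e :: "int \<Rightarrow> complex" and K :: real
  assumes K: "\<And>a b. cmod (\<Sum>n\<in>{a..b}. e n) \<le> K"
  shows "\<forall>f::int\<Rightarrow>real. (\<forall>n\<in>{\<alpha>..\<alpha> + int k}. 0 \<le> f n) \<longrightarrow>
     (\<forall>n n'. \<alpha> \<le> n \<longrightarrow> n \<le> n' \<longrightarrow> n' \<le> \<alpha> + int k \<longrightarrow> f n' \<le> f n) \<longrightarrow>
     cmod (\<Sum>n\<in>{\<alpha>..\<alpha> + int k}. e n * of_real (f n)) \<le> K * f \<alpha>"
proof (induction k)
  case 0
  show ?case using K[of \<alpha> \<alpha>] by (auto simp: norm_mult intro!: mult_right_mono)
next
  case (Suc k)
  show ?case
  proof (intro allI impI)
    fix f :: "int \<Rightarrow> real"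
    assume nn: "\<forall>n\<in>{\<alpha>..\<alpha> + int (Suc k)}. 0 \<le> f n"
      and dec: "\<forall>n n'. \<alpha> \<le> n \<longrightarrow> n \<le> n' \<longrightarrow> n' \<le> \<alpha> + int (Suc k) \<longrightarrow> f n' \<le> f n"
    define \<beta> where "\<beta> = \<alpha> + int (Suc k)"
    define g where "g n = f n - f \<beta>" for n
    have g1: "\<forall>n\<in>{\<alpha>..\<alpha> + int k}. 0 \<le> g n" using dec unfolding g_def \<beta>_def by auto
    have g2: "\<forall>n n'. \<alpha> \<le> n \<longrightarrow> n \<le> n' \<longrightarrow> n' \<le> \<alpha> + int k \<longrightarrow> g n' \<le> g n"
      using dec unfolding g_def by auto
    have IH: "cmod (\<Sum>n\<in>{\<alpha>..\<alpha> + int k}. e n * of_real (g n)) \<le> K * g \<alpha>"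
      using Suc.IH g1 g2 by blast
    have set: "{\<alpha>..\<beta>} = insert \<beta> {\<alpha>..\<alpha> + int k}" unfolding \<beta>_def by auto
    have "(\<Sum>n\<in>{\<alpha>..\<beta>}. e n * of_real (f n)) =
          (\<Sum>n\<in>{\<alpha>..\<beta>}. e n * of_real (g n)) + of_real (f \<beta>) * (\<Sum>n\<in>{\<alpha>..\<beta>}. e n)"
      proof -
        have "(\<Sum>n\<in>{\<alpha>..\<beta>}. e n * of_real (f n)) = (\<Sum>n\<in>{\<alpha>..\<beta>}. e n * of_real (g n) + of_real (f \<beta>) * e n)"
          by (rule sum.cong) (simp_all add: g_def algebra_simps)
        also have "\<dots> = (\<Sum>n\<in>{\<alpha>..\<beta>}. e n * of_real (g n)) + of_real (f \<beta>) * (\<Sum>n\<in>{\<alpha>..\<beta>}. e n)"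
          by (simp add: sum.distrib sum_distrib_left)
        finally show ?thesis .
      qed
    also have "(\<Sum>n\<in>{\<alpha>..\<beta>}. e n * of_real (g n)) = (\<Sum>n\<in>{\<alpha>..\<alpha> + int k}. e n * of_real (g n))"
      using set by (simp add: g_def \<beta>_def)
    finally have eq: "(\<Sum>n\<in>{\<alpha>..\<beta>}. e n * of_real (f n)) = (\<Sum>n\<in>{\<alpha>..\<alpha> + int k}. e n * of_real (g n)) + of_real (f \<beta>) * (\<Sum>n\<in>{\<alpha>..\<beta>}. e n)" .
    have fb: "0 \<le> f \<beta>" using nn unfolding \<beta>_def by auto
    have "cmod (of_real (f \<beta>) * (\<Sum>n\<in>{\<alpha>..\<beta>}. e n)) \<le> f \<beta> * K"
      using K[of \<alpha> \<beta>] fb by (simp add: norm_mult mult_left_mono)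
    then have "cmod (\<Sum>n\<in>{\<alpha>..\<beta>}. e n * of_real (f n)) \<le> K * g \<alpha> + f \<beta> * K"
      unfolding eq using IH norm_triangle_ineq[of "(\<Sum>n\<in>{\<alpha>..\<alpha> + int k}. e n * of_real (g n))" "of_real (f \<beta>) * (\<Sum>n\<in>{\<alpha>..\<beta>}. e n)"]
      by linarith
    also have "\<dots> = K * f \<alpha>" unfolding g_def by (simp add: algebra_simps)
    finally show "cmod (\<Sum>n\<in>{\<alpha>..\<alpha> + int (Suc k)}. e n * of_real (f n)) \<le> K * f \<alpha>" unfolding \<beta>_def .
  qed
qed


lemma abel_inc_aux:
  fixes e :: "int \<Rightarrow> complex" and K :: real
  assumes K: "\<And>a b. cmod (\<Sum>n\<in>{a..b}. e n) \<le> K"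
  shows "\<forall>f::int\<Rightarrow>real. \<forall>\<beta>. (\<forall>n\<in>{\<beta> - int k..\<beta>}. 0 \<le> f n) \<longrightarrow>
     (\<forall>n n'. \<beta> - int k \<le> n \<longrightarrow> n \<le> n' \<longrightarrow> n' \<le> \<beta> \<longrightarrow> f n \<le> f n') \<longrightarrow>
     cmod (\<Sum>n\<in>{\<beta> - int k..\<beta>}. e n * of_real (f n)) \<le> K * f \<beta>"
proof (induction k)
  case 0
  show ?case
  proof (intro allI impI)
    fix f :: "int \<Rightarrow> real" and \<beta> :: int
    assume "\<forall>n\<in>{\<beta> - int 0..\<beta>}. 0 \<le> f n"
    then have "0 \<le> f \<beta>" by simp
    moreover have "cmod (e \<beta>) \<le> K" using K[of \<beta> \<beta>] by simp
    ultimately show "cmod (\<Sum>n\<in>{\<beta> - int 0..\<beta>}. e n * of_real (f n)) \<le> K * f \<beta>"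
      by (simp add: norm_mult mult_right_mono)
  qed
next
  case (Suc k)
  show ?case
  proof (intro allI impI)
    fix f :: "int \<Rightarrow> real" and \<beta> :: int
    assume nn: "\<forall>n\<in>{\<beta> - int (Suc k)..\<beta>}. 0 \<le> f n"
      and inc: "\<forall>n n'. \<beta> - int (Suc k) \<le> n \<longrightarrow> n \<le> n' \<longrightarrow> n' \<le> \<beta> \<longrightarrow> f n \<le> f n'"
    define \<alpha> where "\<alpha> = \<beta> - int (Suc k)"
    define g where "g n = f n - f \<alpha>" for n
    have g1: "\<forall>n\<in>{\<beta> - int k..\<beta>}. 0 \<le> g n" using inc unfolding g_def \<alpha>_def by auto
    have g2: "\<forall>n n'. \<beta> - int k \<le> n \<longrightarrow> n \<le> n' \<longrightarrow> n' \<le> \<beta> \<longrightarrow> g n \<le> g n'"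
      using inc unfolding g_def by auto
    have IH: "cmod (\<Sum>n\<in>{\<beta> - int k..\<beta>}. e n * of_real (g n)) \<le> K * g \<beta>"
      using Suc.IH g1 g2 by blast
    have set: "{\<alpha>..\<beta>} = insert \<alpha> {\<beta> - int k..\<beta>}" unfolding \<alpha>_def by auto
    have "(\<Sum>n\<in>{\<alpha>..\<beta>}. e n * of_real (f n)) =
          (\<Sum>n\<in>{\<alpha>..\<beta>}. e n * of_real (g n)) + of_real (f \<alpha>) * (\<Sum>n\<in>{\<alpha>..\<beta>}. e n)"
      proof -
        have "(\<Sum>n\<in>{\<alpha>..\<beta>}. e n * of_real (f n)) = (\<Sum>n\<in>{\<alpha>..\<beta>}. e n * of_real (g n) + of_real (f \<alpha>) * e n)"
          by (rule sum.cong) (simp_all add: g_def algebra_simps)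
        also have "\<dots> = (\<Sum>n\<in>{\<alpha>..\<beta>}. e n * of_real (g n)) + of_real (f \<alpha>) * (\<Sum>n\<in>{\<alpha>..\<beta>}. e n)"
          by (simp add: sum.distrib sum_distrib_left)
        finally show ?thesis .
      qed
    also have "(\<Sum>n\<in>{\<alpha>..\<beta>}. e n * of_real (g n)) = (\<Sum>n\<in>{\<beta> - int k..\<beta>}. e n * of_real (g n))"
      using set by (simp add: g_def \<alpha>_def)
    finally have eq: "(\<Sum>n\<in>{\<alpha>..\<beta>}. e n * of_real (f n)) = (\<Sum>n\<in>{\<beta> - int k..\<beta>}. e n * of_real (g n)) + of_real (f \<alpha>) * (\<Sum>n\<in>{\<alpha>..\<beta>}. e n)" .
    have fa: "0 \<le> f \<alpha>" using nn unfolding \<alpha>_def by auto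
    have "cmod (of_real (f \<alpha>) * (\<Sum>n\<in>{\<alpha>..\<beta>}. e n)) \<le> f \<alpha> * K"
      using K[of \<alpha> \<beta>] fa by (simp add: norm_mult mult_left_mono)
    then have "cmod (\<Sum>n\<in>{\<alpha>..\<beta>}. e n * of_real (f n)) \<le> K * g \<beta> + f \<alpha> * K"
      unfolding eq using IH norm_triangle_ineq[of "(\<Sum>n\<in>{\<beta> - int k..\<beta>}. e n * of_real (g n))" "of_real (f \<alpha>) * (\<Sum>n\<in>{\<alpha>..\<beta>}. e n)"]
      by linarith
    also have "\<dots> = K * f \<beta>" unfolding g_def by (simp add: algebra_simps)
    finally show "cmod (\<Sum>n\<in>{\<beta> - int (Suc k)..\<beta>}. e n * of_real (f n)) \<le> K * f \<beta>" unfolding \<alpha>_def .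
  qed
qed


lemma convex_int_set:
  fixes S :: "int set"
  assumes fin: "finite S" and ne: "S \<noteq> {}" and cv: "\<And>x y z. x \<in> S \<Longrightarrow> z \<in> S \<Longrightarrow> x \<le> y \<Longrightarrow> y \<le> z \<Longrightarrow> y \<in> S"
  shows "S = {Min S..Max S}"
proof
  show "S \<subseteq> {Min S..Max S}" using fin by auto
  show "{Min S..Max S} \<subseteq> S"
  proof
    fix y assume y: "y \<in> {Min S..Max S}"
    have "Min S \<in> S" "Max S \<in> S" using fin ne by auto
    then show "y \<in> S" using cv[of "Min S" "Max S" y] y by simp
  qed
qed

lemma abel_set:
  fixes e :: "int \<Rightarrow> complex" and K B :: real and f :: "int \<Rightarrow> real"
  assumes K: "\<And>a b. cmod (\<Sum>n\<in>{a..b}. e n) \<le> K" and K0: "0 \<le> K" and B0: "0 \<le> B"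
    and fin: "finite S"
    and conv: "\<And>x y z. x \<in> S \<Longrightarrow> z \<in> S \<Longrightarrow> x \<le> y \<Longrightarrow> y \<le> z \<Longrightarrow> y \<in> S"
    and fB: "\<And>n. n \<in> S \<Longrightarrow> 0 \<le> f n \<and> f n \<le> B"
    and mono: "(\<forall>n\<in>S. \<forall>n'\<in>S. n \<le> n' \<longrightarrow> f n' \<le> f n) \<or> (\<forall>n\<in>S. \<forall>n'\<in>S. n \<le> n' \<longrightarrow> f n \<le> f n')"
  shows "cmod (\<Sum>n\<in>S. e n * of_real (f n)) \<le> K * B"
proof (cases "S = {}")
  case True
  have "0 \<le> K * B" using K0 B0 by simp
  then show ?thesis using True by simp
next
  case False
  define \<alpha> where "\<alpha> = Min S"
  define \<beta> where "\<beta> = Max S"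
  have "S = {Min S..Max S}" using fin False by (rule convex_int_set) (rule conv)
  then have S: "S = {\<alpha>..\<beta>}" using \<alpha>_def \<beta>_def by simp
  have ab: "\<alpha> \<le> \<beta>" using S False by auto
  define k where "k = nat (\<beta> - \<alpha>)"
  have bk: "\<beta> = \<alpha> + int k" "\<alpha> = \<beta> - int k" using ab k_def by auto
  have mem: "n \<in> S \<longleftrightarrow> \<alpha> \<le> n \<and> n \<le> \<beta>" for n using S by simp
  have nn: "\<forall>n\<in>{\<alpha>..\<beta>}. 0 \<le> f n" using fB mem by simp
  have fa: "f \<alpha> \<le> B" "f \<beta> \<le> B" using fB[of \<alpha>] fB[of \<beta>] mem ab by auto
  from mono show ?thesis
  proof
    assume d: "\<forall>n\<in>S. \<forall>n'\<in>S. n \<le> n' \<longrightarrow> f n' \<le> f n"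
    have d': "\<forall>n n'. \<alpha> \<le> n \<longrightarrow> n \<le> n' \<longrightarrow> n' \<le> \<alpha> + int k \<longrightarrow> f n' \<le> f n"
    proof (intro allI impI)
      fix n n' assume h: "\<alpha> \<le> n" "n \<le> n'" "n' \<le> \<alpha> + int k"
      then have "n \<in> S" "n' \<in> S" using mem bk(1) by auto
      then show "f n' \<le> f n" using d h(2) by blast
    qed
    have nn': "\<forall>n\<in>{\<alpha>..\<alpha> + int k}. 0 \<le> f n" using nn bk(1) by simp
    have "cmod (\<Sum>n\<in>{\<alpha>..\<alpha> + int k}. e n * of_real (f n)) \<le> K * f \<alpha>"
      using abel_dec_aux[OF K, of \<alpha> k, THEN spec, of f] nn' d' by blast
    also have "\<dots> \<le> K * B" using fa K0 by (simp add: mult_left_mono)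
    finally show ?thesis using S bk(1) by (simp only:)
  next
    assume d: "\<forall>n\<in>S. \<forall>n'\<in>S. n \<le> n' \<longrightarrow> f n \<le> f n'"
    have d': "\<forall>n n'. \<beta> - int k \<le> n \<longrightarrow> n \<le> n' \<longrightarrow> n' \<le> \<beta> \<longrightarrow> f n \<le> f n'"
    proof (intro allI impI)
      fix n n' assume h: "\<beta> - int k \<le> n" "n \<le> n'" "n' \<le> \<beta>"
      then have "n \<in> S" "n' \<in> S" using mem bk(2) by auto
      then show "f n \<le> f n'" using d h(2) by blast
    qed
    have nn': "\<forall>n\<in>{\<beta> - int k..\<beta>}. 0 \<le> f n" using nn bk(2) by simp
    have "cmod (\<Sum>n\<in>{\<beta> - int k..\<beta>}. e n * of_real (f n)) \<le> K * f \<beta>"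
      using abel_inc_aux[OF K, of k, THEN spec, of f, THEN spec, of \<beta>] nn' d' by blast
    also have "\<dots> \<le> K * B" using fa K0 by (simp add: mult_left_mono)
    finally show ?thesis using S bk(2) by (simp only:)
  qed
qed


definition Qf :: "real \<Rightarrow> real \<Rightarrow> real \<Rightarrow> int \<Rightarrow> int \<Rightarrow> real" where
  "Qf a b c m n = a * (real_of_int m)^2 + 2 * b * real_of_int m * real_of_int n + c * (real_of_int n)^2"

lemma Qf_ge_m: assumes "c > 0" shows "(a*c - b^2)/c * (real_of_int m)^2 \<le> Qf a b c m n"
proof -
  have "c * Qf a b c m n = (c * n + b * m)^2 + (a*c - b^2) * (real_of_int m)^2"
    unfolding Qf_def by (simp add: power2_eq_square algebra_simps)
  then have "(a*c - b^2) * (real_of_int m)^2 \<le> c * Qf a b c m n" by simp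
  then show ?thesis using assms by (simp add: divide_simps mult.commute)
qed

lemma Qf_ge_n: assumes "a > 0" shows "(a*c - b^2)/a * (real_of_int n)^2 \<le> Qf a b c m n"
proof -
  have "a * Qf a b c m n = (a * m + b * n)^2 + (a*c - b^2) * (real_of_int n)^2"
    unfolding Qf_def by (simp add: power2_eq_square algebra_simps)
  then have "(a*c - b^2) * (real_of_int n)^2 \<le> a * Qf a b c m n" by simp
  then show ?thesis using assms by (simp add: divide_simps mult.commute)
qed

lemma Qf_diff: "Qf a b c m n' - Qf a b c m n = (real_of_int n' - n) * ((c * n' + b * m) + (c * n + b * m))"
  unfolding Qf_def by (simp add: power2_eq_square algebra_simps)

lemma Qf_mono_up: assumes c: "c > 0" and h: "0 \<le> c * real_of_int n + b * m" "n \<le> n'" shows "Qf a b c m n \<le> Qf a b c m n'"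
proof -
  have "c * real_of_int n \<le> c * real_of_int n'" using c h(2) by simp
  then have "0 \<le> (real_of_int n' - n) * ((c * n' + b * m) + (c * n + b * m))"
    using h by (intro mult_nonneg_nonneg) simp_all
  then show ?thesis using Qf_diff[of a b c m n' n] by simp
qed

lemma Qf_mono_down: assumes c: "c > 0" and h: "c * real_of_int n' + b * m < 0" "n \<le> n'" shows "Qf a b c m n' \<le> Qf a b c m n"
proof -
  have "c * real_of_int n \<le> c * real_of_int n'" using c h(2) by simp
  then have "(real_of_int n' - n) * ((c * n' + b * m) + (c * n + b * m)) \<le> 0"
    using h by (intro mult_nonneg_nonpos) simp_all
  then show ?thesis using Qf_diff[of a b c m n' n] by simp
qed

lemma msum:
  fixes W D h :: real
  assumes W: "W > 0" and D: "D > 0" and h: "h > 0" and Wh: "D * h^2 = W"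
  shows "(\<Sum>m\<in>{-int N..int N}. 1 / (W + D * (real_of_int m)^2)) \<le> 1/W + 4/(D*h) - 4/(D*(h + real N))"
proof (induction N)
  case 0 then show ?case by simp
next
  case (Suc N)
  define x where "x = real N + 1"
  have x1: "x \<ge> 1" unfolding x_def by simp
  have set: "{-int (Suc N)..int (Suc N)} = insert (int N + 1) (insert (- int N - 1) {-int N..int N})" by auto
  have "(\<Sum>m\<in>{-int (Suc N)..int (Suc N)}. 1 / (W + D * (real_of_int m)^2))
      = 2 / (W + D * x^2) + (\<Sum>m\<in>{-int N..int N}. 1 / (W + D * (real_of_int m)^2))"
    unfolding set x_def by (simp add: power2_eq_square algebra_simps)
  also have "2 / (W + D * x^2) \<le> 4/(D*(h + real N)) - 4/(D*(h + real (Suc N)))"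
  proof -
    have hx: "h + real N = h + x - 1" "h + real (Suc N) = h + x" unfolding x_def by simp_all
    have p1: "h + x - 1 > 0" using h x1 by simp
    have key: "(h + x - 1) * (h + x) \<le> 2 * (h^2 + x^2)"
    proof -
      have "2 * (h^2 + x^2) - (h + x - 1) * (h + x) = (h - x)^2 + h + x" by (simp add: power2_eq_square algebra_simps)
      moreover have "(h - x)^2 \<ge> 0" by simp
      ultimately show ?thesis using h x1 by linarith
    qed
    have gen: "4/(D*a) - 4/(D*b) = 4 / (D * (a * b))" if "a > 0" "b = a + 1" for a b
    proof -
      have b: "b > 0" using that by simp
      have e1: "4/(D*a) = 4*b/(D*(a*b))" using that(1) b D by (simp add: field_simps)
      have e2: "4/(D*b) = 4*a/(D*(a*b))" using that(1) b D by (simp add: field_simps)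
      have "4/(D*a) - 4/(D*b) = (4*b - 4*a)/(D*(a*b))" unfolding e1 e2 by (rule diff_divide_distrib[symmetric])
      then show ?thesis using that by simp
    qed
    have "4/(D*(h + x - 1)) - 4/(D*(h + x)) = 4 / (D * ((h + x - 1) * (h + x)))"
      using gen[of "h + x - 1" "h + x"] p1 by simp
    also have "2 / (W + D * x^2) \<le> 4 / (D * ((h + x - 1) * (h + x)))"
    proof -
      have "W + D * x^2 = D * (h^2 + x^2)" using Wh by (simp add: algebra_simps)
      moreover have "D * ((h + x - 1) * (h + x)) \<le> 2 * (D * (h^2 + x^2))" using key D by simp
      moreover have "0 < D * ((h + x - 1) * (h + x))" using D p1 h x1 by simp
      ultimately have "4 / (2 * (W + D * x^2)) \<le> 4 / (D * ((h + x - 1) * (h + x)))"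
        by (intro divide_left_mono) (simp_all add: mult_pos_pos)
      moreover have "4 / (2 * (W + D * x^2)) = 2 / (W + D * x^2)"
      proof -
        have "4 / (2 * y) = 2 / (y::real)" for y by (cases "y = 0") (simp_all add: field_simps)
        then show ?thesis by blast
      qed
      ultimately show ?thesis by simp
    qed
    finally show ?thesis unfolding hx .
  qed
  finally show ?case using Suc.IH by simp
qed

lemma ptwise:
  fixes W Q D s :: real
  assumes W: "W > 0" and WQ: "W \<le> Q" and DQ: "D * (real_of_int m)^2 \<le> Q" and s: "1 \<le> s" and D0: "0 \<le> D"
  shows "1 / Q powr s \<le> 2 * W powr (1 - s) / (W + D * (real_of_int m)^2)"
proof -
  have Q: "Q > 0" using W WQ by simp
  have "Q powr s = Q powr (1 + (s - 1))" by simp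
  also have "\<dots> = Q powr 1 * Q powr (s - 1)" by (rule powr_add)
  finally have "Q powr s = Q * Q powr (s - 1)" using Q by simp
  moreover have "W powr (s - 1) \<le> Q powr (s - 1)" using s W WQ by (simp add: powr_mono2)
  ultimately have "Q * W powr (s - 1) \<le> Q powr s" using Q by (simp add: mult_left_mono)
  moreover have "(W + D * (real_of_int m)^2) / 2 \<le> Q" using WQ DQ by simp
  ultimately have le: "(W + D * (real_of_int m)^2) / 2 * W powr (s - 1) \<le> Q powr s"
    using W by (meson mult_right_mono order_trans powr_ge_zero)
  have pos: "0 < (W + D * (real_of_int m)^2) / 2 * W powr (s - 1)" using W D0 by (simp add: add_pos_nonneg)
  have "1 / Q powr s \<le> 1 / ((W + D * (real_of_int m)^2) / 2 * W powr (s - 1))"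
    using le pos Q by (intro divide_left_mono) simp_all
  also have "\<dots> = 2 * W powr (1 - s) / (W + D * (real_of_int m)^2)"
    using W by (simp add: powr_diff powr_minus divide_simps)
  finally show ?thesis .
qed



lemma inv_powr_anti: fixes x y s :: real assumes "0 < x" "x \<le> y" "0 \<le> s" shows "1 / y powr s \<le> 1 / x powr s"
proof -
  have "x powr s \<le> y powr s" by (intro powr_mono2) (use assms in auto)
  moreover have "0 < x powr s" using assms by simp
  moreover have "0 < y powr s" using assms by simp
  ultimately show ?thesis by (intro divide_left_mono) (simp_all add: mult_pos_pos)
qed

lemma row_bound:
  fixes a b c v w p s K B :: real and m :: int
  assumes c: "c > 0" and Kb: "\<And>\<alpha> \<beta>. cmod (\<Sum>n\<in>{\<alpha>..\<beta>}. ee v n) \<le> K" and K0: "0 \<le> K"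
    and w: "0 < w" and s: "0 \<le> s" and B0: "0 \<le> B"
    and fin: "finite {n. w < Qf a b c m n \<and> Qf a b c m n < p}"
    and fB: "\<And>n. w < Qf a b c m n \<Longrightarrow> Qf a b c m n < p \<Longrightarrow> 1 / Qf a b c m n powr s \<le> B"
  shows "cmod (\<Sum>n\<in>{n. w < Qf a b c m n \<and> Qf a b c m n < p}. ee v n * of_real (1 / Qf a b c m n powr s)) \<le> 2 * K * B"
proof -
  define R where "R = {n. w < Qf a b c m n \<and> Qf a b c m n < p}"
  define Rp where "Rp = {n \<in> R. 0 \<le> c * real_of_int n + b * m}"
  define Rn where "Rn = {n \<in> R. c * real_of_int n + b * m < 0}"
  define f where "f n = 1 / Qf a b c m n powr s" for n
  have RU: "R = Rp \<union> Rn" unfolding Rp_def Rn_def by auto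
  have disj: "Rp \<inter> Rn = {}" unfolding Rp_def Rn_def by auto
  have finR: "finite R" using fin R_def by simp
  have finp: "finite Rp" "finite Rn" using finR unfolding Rp_def Rn_def by auto
  have fBR: "0 \<le> f n \<and> f n \<le> B" if "n \<in> R" for n
    using fB[of n] that unfolding R_def f_def by simp
  have Qpos: "0 < Qf a b c m n" if "n \<in> R" for n using that w unfolding R_def by simp
  have bp: "cmod (\<Sum>n\<in>Rp. ee v n * of_real (f n)) \<le> K * B"
  proof (rule abel_set[OF Kb K0 B0 finp(1)])
    fix x y z assume h: "x \<in> Rp" "z \<in> Rp" "x \<le> y" "y \<le> z"
    have y0: "0 \<le> c * real_of_int y + b * m"
    proof -
      have "c * real_of_int x \<le> c * real_of_int y" using c h(3) by simp
      then show ?thesis using h(1) unfolding Rp_def by simp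
    qed
    have "Qf a b c m x \<le> Qf a b c m y" using Qf_mono_up[OF c _ h(3)] h(1) unfolding Rp_def by simp
    moreover have "Qf a b c m y \<le> Qf a b c m z" using Qf_mono_up[OF c y0 h(4)] .
    ultimately show "y \<in> Rp" using h(1,2) y0 unfolding Rp_def R_def by auto
  next
    fix n assume "n \<in> Rp" then show "0 \<le> f n \<and> f n \<le> B" using fBR unfolding Rp_def by simp
  next
    show "(\<forall>n\<in>Rp. \<forall>n'\<in>Rp. n \<le> n' \<longrightarrow> f n' \<le> f n) \<or> (\<forall>n\<in>Rp. \<forall>n'\<in>Rp. n \<le> n' \<longrightarrow> f n \<le> f n')"
    proof (rule disjI1, intro ballI impI)
      fix n n' assume h: "n \<in> Rp" "n' \<in> Rp" "n \<le> n'"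
      have "Qf a b c m n \<le> Qf a b c m n'" using Qf_mono_up[OF c _ h(3)] h(1) unfolding Rp_def by simp
      moreover have "0 < Qf a b c m n" using Qpos h(1) unfolding Rp_def by simp
      ultimately show "f n' \<le> f n" unfolding f_def using inv_powr_anti s by blast
    qed
  qed
  have bn: "cmod (\<Sum>n\<in>Rn. ee v n * of_real (f n)) \<le> K * B"
  proof (rule abel_set[OF Kb K0 B0 finp(2)])
    fix x y z assume h: "x \<in> Rn" "z \<in> Rn" "x \<le> y" "y \<le> z"
    have y0: "c * real_of_int y + b * m < 0"
    proof -
      have "c * real_of_int y \<le> c * real_of_int z" using c h(4) by simp
      then show ?thesis using h(2) unfolding Rn_def by simp
    qed
    have "Qf a b c m y \<le> Qf a b c m x" using Qf_mono_down[OF c y0 h(3)] .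
    moreover have "Qf a b c m z \<le> Qf a b c m y" using Qf_mono_down[OF c _ h(4)] h(2) unfolding Rn_def by simp
    ultimately show "y \<in> Rn" using h(1,2) y0 unfolding Rn_def R_def by auto
  next
    fix n assume "n \<in> Rn" then show "0 \<le> f n \<and> f n \<le> B" using fBR unfolding Rn_def by simp
  next
    show "(\<forall>n\<in>Rn. \<forall>n'\<in>Rn. n \<le> n' \<longrightarrow> f n' \<le> f n) \<or> (\<forall>n\<in>Rn. \<forall>n'\<in>Rn. n \<le> n' \<longrightarrow> f n \<le> f n')"
    proof (rule disjI2, intro ballI impI)
      fix n n' assume h: "n \<in> Rn" "n' \<in> Rn" "n \<le> n'"
      have "Qf a b c m n' \<le> Qf a b c m n" using Qf_mono_down[OF c _ h(3)] h(2) unfolding Rn_def by simp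
      moreover have "0 < Qf a b c m n'" using Qpos h(2) unfolding Rn_def by simp
      ultimately show "f n \<le> f n'" unfolding f_def using inv_powr_anti s by blast
    qed
  qed
  have eq: "(\<Sum>n\<in>R. ee v n * of_real (f n)) = (\<Sum>n\<in>Rp. ee v n * of_real (f n)) + (\<Sum>n\<in>Rn. ee v n * of_real (f n))"
    unfolding RU using finp disj by (rule sum.union_disjoint)
  have "cmod (\<Sum>n\<in>R. ee v n * of_real (f n)) \<le> K * B + K * B"
    unfolding eq using bp bn norm_triangle_ineq[of "\<Sum>n\<in>Rp. ee v n * of_real (f n)" "\<Sum>n\<in>Rn. ee v n * of_real (f n)"]
    by linarith
  then show ?thesis unfolding R_def f_def by (simp add: mult_ac)
qed



lemma key:
  fixes a b c u v :: real
  assumes a: "a > 0" and c: "c > 0" and disc: "b^2 < a*c" and v: "v \<notin> \<int>"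
  shows "\<exists>C. \<forall>s p w. 1 \<le> s \<and> s \<le> 2 \<and> 0 < w \<and> w < p \<longrightarrow>
     cmod (\<Sum>(m,n)\<in>{(m::int,n::int). w < Qf a b c m n \<and> Qf a b c m n < p}.
        ee u m * (ee v n * of_real (1 / Qf a b c m n powr s))) \<le> C * w powr (1/2 - s)"
proof -
  define D where "D = (a*c - b^2)/c"
  define D2 where "D2 = (a*c - b^2)/a"
  define c0 where "c0 = min D D2"
  have D: "D > 0" and D2: "D2 > 0" using a c disc unfolding D_def D2_def by simp_all
  have c0: "c0 > 0" "c0 \<le> D" "c0 \<le> D2" unfolding c0_def using D D2 by simp_all
  define K where "K = 2 / cmod (ee v 1 - 1)"
  have K0: "0 \<le> K" unfolding K_def by simp
  have Kb: "\<And>\<alpha> \<beta>. cmod (\<Sum>n\<in>{\<alpha>..\<beta>}. ee v n) \<le> K" unfolding K_def using geo_bound[OF v] by blast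
  define C where "C = 4 * K * (1 / sqrt c0 + 4 / sqrt D)"
  have C0: "0 \<le> C" unfolding C_def using K0 c0 D by simp
  have QD: "D * (real_of_int m)^2 \<le> Qf a b c m n" for m n using Qf_ge_m[OF c] unfolding D_def .
  have QD2: "D2 * (real_of_int n)^2 \<le> Qf a b c m n" for m n using Qf_ge_n[OF a] unfolding D2_def .
  have Qc0: "c0 \<le> Qf a b c m n" if "(m, n) \<noteq> (0, 0)" for m n
  proof (cases "m = 0")
    case False
    then have "1 \<le> (real_of_int m)^2" by (smt (verit, best) of_int_1_le_iff of_int_power power2_less_eq_zero_iff)
    then have "D \<le> D * (real_of_int m)^2" using D by simp
    then show ?thesis using QD[of m n] c0 by linarith
  next
    case True
    then have "n \<noteq> 0" using that by simp
    then have "1 \<le> (real_of_int n)^2" by (smt (verit, best) of_int_1_le_iff of_int_power power2_less_eq_zero_iff)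
    then have "D2 \<le> D2 * (real_of_int n)^2" using D2 by simp
    then show ?thesis using QD2[of n m] c0 by linarith
  qed
  show ?thesis
  proof (rule exI[of _ C], intro allI impI)
    fix s p w :: real
    assume h: "1 \<le> s \<and> s \<le> 2 \<and> 0 < w \<and> w < p"
    then have s: "1 \<le> s" and w: "0 < w" and wp: "w < p" by auto
    define W where "W = max w c0"
    have W: "W > 0" "w \<le> W" "c0 \<le> W" unfolding W_def using w by auto
    have Q0: "Qf a b c 0 0 = 0" unfolding Qf_def by simp
    have QW: "W \<le> Qf a b c m n" if "w < Qf a b c m n" for m n
    proof -
      have "(m, n) \<noteq> (0, 0)" using that w Q0 by auto
      then show ?thesis using Qc0 that unfolding W_def by fastforce
    qed
    define N where "N = nat \<lceil>p / c0\<rceil>"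
    have bnd: "\<bar>m\<bar> \<le> int N" if "c0 * (real_of_int m)^2 < p" for m :: int
    proof -
      have i: "\<bar>m\<bar> \<le> m^2"
      proof (cases "m = 0")
        case True then show ?thesis by simp
      next
        case False then have "1 \<le> \<bar>m\<bar>" by linarith
        then have "\<bar>m\<bar> * 1 \<le> \<bar>m\<bar> * \<bar>m\<bar>" by (intro mult_left_mono) auto
        then show ?thesis by (simp add: power2_eq_square)
      qed
      have "real_of_int \<bar>m\<bar> \<le> real_of_int (m^2)" using i by (simp only: of_int_le_iff)
      then have "real_of_int \<bar>m\<bar> \<le> (real_of_int m)^2" by simp
      also have "\<dots> \<le> p / c0" using that c0 by (simp add: field_simps)
      also have "\<dots> \<le> real_of_int (int N)" unfolding N_def by linarith
      finally show ?thesis by linarith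
    qed
    have mb: "\<bar>m\<bar> \<le> int N" if "Qf a b c m n < p" for m n
    proof -
      have "c0 * (real_of_int m)^2 \<le> D * (real_of_int m)^2" using c0 by (simp add: mult_right_mono)
      then show ?thesis using bnd QD[of m n] that by fastforce
    qed
    have nb: "\<bar>n\<bar> \<le> int N" if "Qf a b c m n < p" for m n
    proof -
      have "c0 * (real_of_int n)^2 \<le> D2 * (real_of_int n)^2" using c0 by (simp add: mult_right_mono)
      then show ?thesis using bnd QD2[of n m] that by fastforce
    qed
    define R where "R m = {n. w < Qf a b c m n \<and> Qf a b c m n < p}" for m
    define F where "F m n = ee u m * (ee v n * of_real (1 / Qf a b c m n powr s))" for m n
    define Bm where "Bm m = 2 * W powr (1 - s) / (W + D * (real_of_int m)^2)" for m :: int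
    have finR: "finite (R m)" for m
    proof (rule finite_subset)
      show "R m \<subseteq> {-int N..int N}" unfolding R_def using nb by fastforce
    qed simp
    have Aeq: "{(m::int,n::int). w < Qf a b c m n \<and> Qf a b c m n < p} = Sigma {-int N..int N} R"
      unfolding R_def using mb by fastforce
    have sumeq: "(\<Sum>(m,n)\<in>{(m::int,n::int). w < Qf a b c m n \<and> Qf a b c m n < p}. F m n)
        = (\<Sum>m\<in>{-int N..int N}. \<Sum>n\<in>R m. F m n)"
      unfolding Aeq by (rule sum.Sigma[symmetric]) (simp_all add: finR)
    have row: "cmod (\<Sum>n\<in>R m. F m n) \<le> 2 * K * Bm m" for m
    proof -
      have "(\<Sum>n\<in>R m. F m n) = ee u m * (\<Sum>n\<in>R m. ee v n * of_real (1 / Qf a b c m n powr s))"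
        unfolding F_def by (simp add: sum_distrib_left)
      then have "cmod (\<Sum>n\<in>R m. F m n) = cmod (\<Sum>n\<in>R m. ee v n * of_real (1 / Qf a b c m n powr s))"
        by (simp add: norm_mult ee_norm)
      also have "\<dots> \<le> 2 * K * Bm m"
        unfolding R_def
      proof (rule row_bound[OF c Kb K0 w])
        show "0 \<le> s" using s by simp
        show "0 \<le> Bm m" unfolding Bm_def using W D by simp
        show "finite {n. w < Qf a b c m n \<and> Qf a b c m n < p}" using finR[of m] unfolding R_def .
        fix n assume "w < Qf a b c m n" "Qf a b c m n < p"
        then show "1 / Qf a b c m n powr s \<le> Bm m"
          unfolding Bm_def using ptwise[OF W(1) QW QD s, of m n] D by simp
      qed
      finally show ?thesis .
    qed
    define h where "h = sqrt (W / D)"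
    have hpos: "h > 0" unfolding h_def using W D by simp
    have Dh: "D * h^2 = W" unfolding h_def using W D by simp
    have ms: "(\<Sum>m\<in>{-int N..int N}. 1 / (W + D * (real_of_int m)^2)) \<le> 1/W + 4/(D*h)"
      using msum[OF W(1) D hpos Dh, of N] hpos D by (smt (verit) divide_nonneg_pos mult_pos_pos of_nat_0_le_iff)
    have Dh2: "D * h = sqrt D * sqrt W" unfolding h_def using D W
      by (smt (verit, del_insts) real_div_sqrt real_sqrt_divide times_divide_eq_left times_divide_eq_right)
    have W1: "1 / W \<le> 1 / (sqrt c0 * sqrt W)" using c0(1) W(1,3)
      by (smt (verit, del_insts) divide_mono divide_nonpos_nonneg eq_divide_eq_1
    eq_divide_imp nonzero_divide_eq_eq real_div_sqrt real_divide_square_eq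
    real_sqrt_gt_0_iff times_divide_eq_left times_divide_eq_right
    times_divide_times_eq)
    have msum2: "(\<Sum>m\<in>{-int N..int N}. 1 / (W + D * (real_of_int m)^2)) \<le> (1 / sqrt c0 + 4 / sqrt D) / sqrt W"
    proof -
      have "(1 / sqrt c0 + 4 / sqrt D) / sqrt W = 1 / (sqrt c0 * sqrt W) + 4 / (D * h)"
        unfolding Dh2 by (simp add: add_divide_distrib divide_divide_eq_left ac_simps)
      then show ?thesis using ms W1 by linarith
    qed
    have "cmod (\<Sum>m\<in>{-int N..int N}. \<Sum>n\<in>R m. F m n) \<le> (\<Sum>m\<in>{-int N..int N}. 2 * K * Bm m)"
      by (rule sum_norm_le) (rule row)
    also have "\<dots> = 4 * K * W powr (1 - s) * (\<Sum>m\<in>{-int N..int N}. 1 / (W + D * (real_of_int m)^2))"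
      unfolding Bm_def by (simp add: sum_distrib_left mult_ac)
    also have "\<dots> \<le> 4 * K * W powr (1 - s) * ((1 / sqrt c0 + 4 / sqrt D) / sqrt W)"
      using msum2 K0 by (intro mult_left_mono) simp_all
    also have "\<dots> = C * (W powr (1 - s) / sqrt W)" unfolding C_def by simp
    also have "W powr (1 - s) / sqrt W = W powr (1/2 - s)"
    proof -
      have "W powr (1/2 - s) = W powr ((1 - s) - 1/2)" by simp
      also have "\<dots> = W powr (1 - s) / W powr (1/2)" by (rule powr_diff)
      finally show ?thesis using W by (simp add: powr_half_sqrt)
    qed
    also have "C * W powr (1/2 - s) \<le> C * w powr (1/2 - s)"
      using C0 powr_mono2'[of "1/2 - s" w W] s w W by (intro mult_left_mono) simp_all
    finally show "cmod (\<Sum>(m,n)\<in>{(m::int,n::int). w < Qf a b c m n \<and> Qf a b c m n < p}.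
        ee u m * (ee v n * of_real (1 / Qf a b c m n powr s))) \<le> C * w powr (1/2 - s)"
      using sumeq unfolding F_def by simp
  qed
qed



lemma cm: "(cmod (of_int m * \<tau> + of_int n))^2 = Qf ((Re \<tau>)^2 + (Im \<tau>)^2) (Re \<tau>) 1 m n"
  unfolding Qf_def cmod_power2 by (simp add: power2_eq_square algebra_simps)

lemma powr2: fixes r s :: real assumes "0 \<le> r" shows "r powr (2 * s) = (r^2) powr s"
proof (cases "r = 0")
  case True then show ?thesis by simp
next
  case False
  then have "r > 0" using assms by simp
  then have "r^2 = r powr 2" by (simp add: powr_numeral)
  then show ?thesis by (simp add: powr_powr)
qed

lemma expsplit: "exp (2 * of_real pi * \<i> * of_real (of_int m * u + of_int n * v)) = ee u m * ee v n"
  unfolding ee_def by (simp add: exp_add[symmetric] algebra_simps)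

lemma bridge:
  "lattice_sum \<tau> u v p w s = (\<Sum>(m,n)\<in>{(m::int,n::int). w < Qf ((Re \<tau>)^2 + (Im \<tau>)^2) (Re \<tau>) 1 m n \<and> Qf ((Re \<tau>)^2 + (Im \<tau>)^2) (Re \<tau>) 1 m n < p}.
        ee u m * (ee v n * of_real (1 / Qf ((Re \<tau>)^2 + (Im \<tau>)^2) (Re \<tau>) 1 m n powr s)))"
  unfolding lattice_sum_def
proof (rule sum.cong)
  show "{(m::int, n::int). w < (cmod (of_int m * \<tau> + of_int n))\<^sup>2 \<and> (cmod (of_int m * \<tau> + of_int n))\<^sup>2 < p} =
    {(m::int,n::int). w < Qf ((Re \<tau>)^2 + (Im \<tau>)^2) (Re \<tau>) 1 m n \<and> Qf ((Re \<tau>)^2 + (Im \<tau>)^2) (Re \<tau>) 1 m n < p}"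
    by (simp add: cm)
next
  fix x assume "x \<in> {(m::int,n::int). w < Qf ((Re \<tau>)^2 + (Im \<tau>)^2) (Re \<tau>) 1 m n \<and> Qf ((Re \<tau>)^2 + (Im \<tau>)^2) (Re \<tau>) 1 m n < p}"
  obtain m n where x: "x = (m, n)" by (cases x)
  show "(case x of (m, n) \<Rightarrow> exp (2 * of_real pi * \<i> * of_real (of_int m * u + of_int n * v)) / of_real (cmod (of_int m * \<tau> + of_int n) powr (2 * s))) =
    (case x of (m, n) \<Rightarrow> ee u m * (ee v n * of_real (1 / Qf ((Re \<tau>)^2 + (Im \<tau>)^2) (Re \<tau>) 1 m n powr s)))"
    unfolding x by (simp only: prod.case expsplit powr2[OF norm_ge_zero] cm) (simp add: divide_inverse)
qed

lemma swapsum: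
  "(\<Sum>(m,n)\<in>{(m::int,n::int). w < Qf A b 1 m n \<and> Qf A b 1 m n < p}. ee u m * (ee v n * of_real (1 / Qf A b 1 m n powr s)))
   = (\<Sum>(m,n)\<in>{(m::int,n::int). w < Qf 1 b A m n \<and> Qf 1 b A m n < p}. ee v m * (ee u n * of_real (1 / Qf 1 b A m n powr s)))"
proof -
  have q: "Qf 1 b A m n = Qf A b 1 n m" for m n unfolding Qf_def by (simp add: algebra_simps)
  show ?thesis
  proof (rule sum.reindex_bij_witness[of _ prod.swap prod.swap])
    fix x assume "x \<in> {(m::int,n::int). w < Qf A b 1 m n \<and> Qf A b 1 m n < p}"
    then show "prod.swap (prod.swap x) = x" "prod.swap x \<in> {(m::int,n::int). w < Qf 1 b A m n \<and> Qf 1 b A m n < p}"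
      by (auto simp: q)
  next
    fix x assume "x \<in> {(m::int,n::int). w < Qf 1 b A m n \<and> Qf 1 b A m n < p}"
    then show "prod.swap (prod.swap x) = x" "prod.swap x \<in> {(m::int,n::int). w < Qf A b 1 m n \<and> Qf A b 1 m n < p}"
      by (auto simp: q)
  next
    fix x :: "int \<times> int"
    obtain m n where x: "x = (m, n)" by (cases x)
    show "(case prod.swap x of (m, n) \<Rightarrow> ee v m * (ee u n * of_real (1 / Qf 1 b A m n powr s))) =
          (case x of (m, n) \<Rightarrow> ee u m * (ee v n * of_real (1 / Qf A b 1 m n powr s)))"
      unfolding x by (simp add: q)
  qed
qed

theorem mainTheorem9:
  fixes \<tau> :: complex and u v :: real
  assumes "Im \<tau> > 0"
    and "\<not> (u \<in> \<int> \<and> v \<in> \<int>)"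
  shows "\<exists>C::real. \<forall>s p w. 1 \<le> s \<and> s \<le> 2 \<and> 0 < w \<and> w < p \<longrightarrow>
           cmod (lattice_sum \<tau> u v p w s) \<le> C * w powr (1/2 - s)"
proof -
  define A where "A = (Re \<tau>)^2 + (Im \<tau>)^2"
  have y2: "(Im \<tau>)^2 > 0" using assms(1) by simp
  have A: "A > 0" unfolding A_def using y2 by (simp add: add_nonneg_pos)
  have disc1: "(Re \<tau>)^2 < A * 1" unfolding A_def using y2 by simp
  have disc2: "(Re \<tau>)^2 < 1 * A" unfolding A_def using y2 by simp
  show ?thesis
  proof (cases "v \<in> \<int>")
    case False
    obtain C where C: "\<forall>s p w. 1 \<le> s \<and> s \<le> 2 \<and> 0 < w \<and> w < p \<longrightarrow>
     cmod (\<Sum>(m,n)\<in>{(m::int,n::int). w < Qf A (Re \<tau>) 1 m n \<and> Qf A (Re \<tau>) 1 m n < p}.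
        ee u m * (ee v n * of_real (1 / Qf A (Re \<tau>) 1 m n powr s))) \<le> C * w powr (1/2 - s)"
      using key[OF A _ disc1 False, of u] by auto
    show ?thesis
    proof (rule exI[of _ C], intro allI impI)
      fix s p w :: real assume h: "1 \<le> s \<and> s \<le> 2 \<and> 0 < w \<and> w < p"
      show "cmod (lattice_sum \<tau> u v p w s) \<le> C * w powr (1/2 - s)"
        unfolding bridge[folded A_def] by (rule C[unfolded A_def, rule_format, OF h])
    qed
  next
    case True
    then have u: "u \<notin> \<int>" using assms(2) by blast
    obtain C where C: "\<forall>s p w. 1 \<le> s \<and> s \<le> 2 \<and> 0 < w \<and> w < p \<longrightarrow>
     cmod (\<Sum>(m,n)\<in>{(m::int,n::int). w < Qf 1 (Re \<tau>) A m n \<and> Qf 1 (Re \<tau>) A m n < p}.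
        ee v m * (ee u n * of_real (1 / Qf 1 (Re \<tau>) A m n powr s))) \<le> C * w powr (1/2 - s)"
      using key[OF _ A disc2 u, of v] by auto
    show ?thesis
    proof (rule exI[of _ C], intro allI impI)
      fix s p w :: real assume h: "1 \<le> s \<and> s \<le> 2 \<and> 0 < w \<and> w < p"
      show "cmod (lattice_sum \<tau> u v p w s) \<le> C * w powr (1/2 - s)"
        unfolding bridge[folded A_def] swapsum by (rule C[unfolded A_def, rule_format, OF h])
    qed
  qed
qed


end
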